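(* Let $0\le\alpha<1$ and let $v$ be a $C^\infty$ real function such that $v(\varphi)>0$ and $v'(\varphi)>0$ for all $\varphi$ larger than some $\varphi_0$, and such that $(\log\sqrt{v(\varphi)})'\to\alpha$ as $\varphi\to\infty$. Let $h_{\mathrm s}$ be the separatrix solution of $h'=\sqrt{h^2-v}$. Then $$h_{\mathrm s}(\varphi)\sim\frac{\sqrt{v(\varphi)}}{\sqrt{1-\alpha^2}},\qquad\varphi\to\infty.$$
   Context: Take $\varphi_0$ such that $(\log\sqrt v)'<1$ on $(\varphi_0,\infty)$. A solution of $h'=\sqrt{h^2-v}$ in $R_0=\{(\varphi,h):\varphi\ge\varphi_0,\ h>\sqrt{v(\varphi)}\}$ is of type A if it reaches the curve $h=\sqrt{v(\varphi)}$ at a finite $\varphi$, and of type B if it remains in $R_0$ for all $\varphi>\varphi_0$. For such $v$ both types occur, there is $r<\infty$ such that solutions with $h(\varphi_0)<r$ are of type A and those with $h(\varphi_0)>r$ are of type B, and the separatrix $h_{\mathrm s}$ is the solution with $h_{\mathrm s}(\varphi_0)=r$; it is defined for all $\varphi\ge\varphi_0$ and $h_{\mathrm s}/\sqrt v$ is bounded there. *)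

theory Defs
  imports "HOL-Analysis.Analysis" "HOL-Library.Landau_Symbols"
begin

definition typeB_solution :: "(real \<Rightarrow> real) \<Rightarrow> real \<Rightarrow> (real \<Rightarrow> real) \<Rightarrow> bool" where
  "typeB_solution v a h \<longleftrightarrow>
     (\<forall>\<phi>\<ge>a. h \<phi> > sqrt (v \<phi>) \<and>
        (h has_real_derivative sqrt ((h \<phi>)\<^sup>2 - v \<phi>)) (at \<phi> within {a..}))"

text \<open>The separatrix: the solution whose initial value at a is the threshold
  r = inf of initial values of type-B solutions (r separates type A from type B).\<close>
definition separatrix :: "(real \<Rightarrow> real) \<Rightarrow> real \<Rightarrow> (real \<Rightarrow> real) \<Rightarrow> bool" where
  "separatrix v a h \<longleftrightarrow>
     typeB_solution v a h \<and> h a = Inf {g a | g. typeB_solution v a g}"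

end

theory Submission
  imports Defs
begin


lemma cont_int_clamp:
  fixes H :: "real \<Rightarrow> real"
  assumes "continuous_on UNIV H"
  shows "continuous_on UNIV (\<lambda>t. integral {p..max t p} H)"
proof -
  have "continuous (at t) (\<lambda>t. integral {p..max t p} H)" for t
  proof -
    define b where "b = max t p + 1"
    have c1: "continuous_on {p..b} (\<lambda>x. integral {p..x} H)"
      by (rule indefinite_integral_continuous_1)
         (rule integrable_continuous_real, rule continuous_on_subset[OF assms], simp)
    have c2: "continuous_on {..<b} (\<lambda>t. max t p)" by (intro continuous_intros)
    have "continuous_on {..<b} (\<lambda>t. integral {p..max t p} H)"
      using continuous_on_compose2[OF c1 c2] b_def by (force simp: max_def)
    then show ?thesis by (rule continuous_on_interior) (auto simp: b_def interior_open)
  qed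
  then show ?thesis by (simp add: continuous_at_imp_continuous_on)
qed

lemma int_exp_bound:
  fixes G :: "real \<Rightarrow> real"
  assumes K: "K > 0" and pq: "p \<le> q" and cG: "continuous_on {p..q} G"
    and bd: "\<And>s. s \<in> {p..q} \<Longrightarrow> \<bar>G s\<bar> \<le> C * exp (K * (s - p))"
  shows "\<bar>integral {p..q} G\<bar> \<le> C * exp (K * (q - p)) / K"
proof -
  have d: "((\<lambda>s. C / K * exp (K * (s - p))) has_vector_derivative C * exp (K * (s - p))) (at s within {p..q})" for s
    using K by (auto intro!: derivative_eq_intros simp: has_real_derivative_iff_has_vector_derivative[symmetric])
  have hi: "((\<lambda>s. C * exp (K * (s - p))) has_integral (C / K * exp (K * (q - p)) - C / K * exp (K * (p - p)))) {p..q}"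
    by (rule fundamental_theorem_of_calculus[OF pq]) (use d in auto)
  have "\<bar>integral {p..q} G\<bar> \<le> integral {p..q} (\<lambda>s. C * exp (K * (s - p)))"
    using integral_norm_bound_integral[of G "{p..q}" "\<lambda>s. C * exp (K * (s - p))"] bd
      integrable_continuous_real[OF cG] hi by (auto simp: has_integral_integrable)
  also have "\<dots> = C / K * exp (K * (q - p)) - C / K" using integral_unique[OF hi] by simp
  also have "\<dots> \<le> C * exp (K * (q - p)) / K"
  proof -
    have "\<bar>G p\<bar> \<le> C" using bd[of p] pq by simp
    then have "C \<ge> 0" by linarith
    then show ?thesis using K by (simp add: divide_nonneg_pos)
  qed
  finally show ?thesis .
qed

lemma ode_exists:
  fixes F :: "real \<Rightarrow> real \<Rightarrow> real"
  assumes cont: "continuous_on UNIV (\<lambda>z. F (fst z) (snd z))"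
    and L: "L \<ge> 0" and lip: "\<And>t x y. t \<ge> p \<Longrightarrow> \<bar>F t x - F t y\<bar> \<le> L * \<bar>x - y\<bar>"
    and Kz: "Kz \<ge> 0" and growth: "\<And>t. t \<ge> p \<Longrightarrow> \<bar>F t 0\<bar> \<le> M * exp (Kz * (t - p))"
  shows "\<exists>g. g p = xi \<and> (\<forall>t\<ge>p. (g has_real_derivative F t (g t)) (at t within {p..}))"
proof -
  define K where "K = Kz + 2*L + 1"
  have Kpos: "K > 0" using Kz L by (simp add: K_def)
  define E where "E s = exp (K*(s-p))" for s
  have Epos: "E s > 0" for s by (simp add: E_def)
  have E1: "s \<ge> p \<Longrightarrow> E s \<ge> 1" for s using Kpos by (simp add: E_def)
  have Eg: "s \<ge> p \<Longrightarrow> exp (Kz * (s - p)) \<le> E s" for s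
    unfolding E_def K_def using L by (intro exp_mono mult_right_mono) auto
  define G where "G w s = F s (E s * w s)" for w :: "real \<Rightarrow> real" and s
  define Phf where "Phf w t = (xi + integral {p..max t p} (G w)) / E (max t p)" for w t
  have cE: "continuous_on UNIV E" unfolding E_def by (intro continuous_intros)
  have cG: "continuous_on UNIV (G w)" if "continuous_on UNIV w" for w
  proof -
    have "continuous_on UNIV (\<lambda>s. (s, E s * w s))" using that cE by (intro continuous_intros) auto
    from continuous_on_compose2[OF cont this] show ?thesis by (simp add: G_def)
  qed
  have cPh: "continuous_on UNIV (Phf w)" if "continuous_on UNIV w" for w
  proof -
    have "continuous_on UNIV (\<lambda>t. E (max t p))"
      using continuous_on_compose2[OF cE, of UNIV "\<lambda>t. max t p"] continuous_on_max[OF continuous_on_id continuous_on_const, of UNIV p] by auto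
    then show ?thesis unfolding Phf_def using cont_int_clamp[OF cG[OF that], of p] Epos
      by (intro continuous_intros) (auto, metis Epos less_irrefl)
  qed
  have Gbd: "\<bar>G w s\<bar> \<le> (M + L * B) * E s" if "\<And>s. \<bar>w s\<bar> \<le> B" "s \<ge> p" for w B s
  proof -
    have "\<bar>G w s\<bar> \<le> \<bar>F s 0\<bar> + L * \<bar>E s * w s\<bar>" using lip[OF that(2), of "E s * w s" 0] unfolding G_def by simp
    also have "\<dots> \<le> M * E s + L * (E s * B)"
    proof -
      have "M \<ge> 0" using growth[of p] by simp
      then have "\<bar>F s 0\<bar> \<le> M * E s" using growth[OF that(2)] Eg[OF that(2)]
        by (smt (verit) mult_left_mono)
      moreover have "\<bar>E s * w s\<bar> \<le> E s * B" using that(1)[of s] Epos[of s] by (simp add: abs_mult)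
      ultimately show ?thesis using L by (smt (verit) mult_left_mono)
    qed
    finally show ?thesis by (simp add: algebra_simps)
  qed
  have Phbd: "\<bar>Phf w t\<bar> \<le> \<bar>xi\<bar> + (M + L * B) / K" if "\<And>s. \<bar>w s\<bar> \<le> B" "continuous_on UNIV w" for w B t
  proof -
    let ?q = "max t p"
    have i: "\<bar>integral {p..?q} (G w)\<bar> \<le> (M + L * B) * E ?q / K"
      using int_exp_bound[OF Kpos, of p ?q "G w" "M + L * B"] Gbd[OF that(1)] continuous_on_subset[OF cG[OF that(2)]]
      by (auto simp: E_def)
    have "\<bar>Phf w t\<bar> \<le> (\<bar>xi\<bar> + \<bar>integral {p..?q} (G w)\<bar>) / E ?q"
      unfolding Phf_def using Epos[of ?q] by (simp add: abs_div divide_right_mono)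
    also have "\<dots> = \<bar>xi\<bar> / E ?q + \<bar>integral {p..?q} (G w)\<bar> / E ?q" by (simp add: add_divide_distrib)
    also have "\<dots> \<le> \<bar>xi\<bar> + (M + L * B) / K"
    proof -
      have "\<bar>xi\<bar> / E ?q \<le> \<bar>xi\<bar>" using E1[of ?q] by (simp add: divide_le_eq)
          (smt (verit) abs_ge_zero mult_le_cancel_left1)
      moreover have "\<bar>integral {p..?q} (G w)\<bar> / E ?q \<le> (M + L * B) / K"
        using i Epos[of ?q] Kpos by (simp add: divide_le_eq field_simps)
      ultimately show ?thesis by linarith
    qed
    finally show ?thesis .
  qed
  have Phmem: "Phf (apply_bcontfun w) \<in> bcontfun" for w
  proof -
    obtain B where B: "\<And>s. \<bar>apply_bcontfun w s\<bar> \<le> B"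
      using norm_bounded[of w] by (metis real_norm_def)
    show ?thesis by (rule bcontfun_normI[OF cPh, of _ "\<bar>xi\<bar> + (M + L*B)/K"]) (use Phbd[of "apply_bcontfun w" B] B in auto)
  qed
  define Ph where "Ph w = Bcontfun (Phf (apply_bcontfun w))" for w
  have Ph_app: "apply_bcontfun (Ph w) = Phf (apply_bcontfun w)" for w
    unfolding Ph_def using Phmem[of w] by (simp add: Bcontfun_inverse)
  have contr: "dist (Ph w1) (Ph w2) \<le> (L / K) * dist w1 w2" for w1 w2
  proof (rule dist_bound)
    fix t
    let ?q = "max t p"
    let ?D = "dist w1 w2"
    have c1: "continuous_on {p..?q} (G w1)" "continuous_on {p..?q} (G w2)"
      using continuous_on_subset[OF cG] by auto
    have "\<bar>G w1 s - G w2 s\<bar> \<le> (L * ?D) * E s" if "s \<in> {p..?q}" for s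
    proof -
      have "\<bar>G w1 s - G w2 s\<bar> \<le> L * \<bar>E s * w1 s - E s * w2 s\<bar>" unfolding G_def using lip that by auto
      also have "\<dots> = L * (E s * \<bar>w1 s - w2 s\<bar>)" using Epos[of s]
        by (simp add: abs_mult right_diff_distrib[symmetric])
      also have "\<dots> \<le> L * (E s * ?D)"
        using dist_bounded[of w1 s w2] Epos[of s] L by (intro mult_left_mono) (auto simp: dist_real_def)
      finally show ?thesis by (simp add: algebra_simps)
    qed
    then have i: "\<bar>integral {p..?q} (\<lambda>s. G w1 s - G w2 s)\<bar> \<le> (L * ?D) * E ?q / K"
      using int_exp_bound[OF Kpos, of p ?q "\<lambda>s. G w1 s - G w2 s" "L * ?D"] c1
      by (auto intro!: continuous_intros simp: E_def)
    have "integral {p..?q} (\<lambda>s. G w1 s - G w2 s) = integral {p..?q} (G w1) - integral {p..?q} (G w2)"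
      by (rule integral_diff) (use c1 integrable_continuous_real in auto)
    then have "dist (Phf w1 t) (Phf w2 t) = \<bar>integral {p..?q} (\<lambda>s. G w1 s - G w2 s)\<bar> / E ?q"
      unfolding Phf_def dist_real_def using Epos[of ?q]
      by (simp add: diff_divide_distrib[symmetric] abs_div)
    also have "\<dots> \<le> (L / K) * ?D" using i Epos[of ?q] Kpos by (simp add: divide_le_eq field_simps)
    finally show "dist (Ph w1 t) (Ph w2 t) \<le> L / K * ?D" by (simp add: Ph_app)
  qed
  have "L / K < 1" using Kpos Kz L by (simp add: K_def)
  then obtain w where w: "Ph w = w"
    using banach_fix_type[of "L / K" Ph] contr L Kpos by auto
  then have wfix: "apply_bcontfun w t = Phf (apply_bcontfun w) t" for t by (metis Ph_app)
  define g where "g t = E t * apply_bcontfun w t" for t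
  have geq: "g t = xi + integral {p..t} (G (apply_bcontfun w))" if "t \<ge> p" for t
    using wfix[of t] that Epos[of t] unfolding g_def Phf_def by (simp add: max_def)
  have Gg: "G (apply_bcontfun w) s = F s (g s)" for s by (simp add: G_def g_def)
  show ?thesis
  proof (intro exI conjI allI impI)
    show "g p = xi" using geq[of p] by simp
    fix t assume t: "t \<ge> p"
    have d: "((\<lambda>x. integral {p..x} (G (apply_bcontfun w))) has_real_derivative G (apply_bcontfun w) t) (at t within {p..t+1})"
      by (rule integral_has_real_derivative) (use continuous_on_subset[OF cG] t in auto)
    have ateq: "at t within {p..t+1} = at t within {p..}"
      by (rule at_within_nhd[of _ "{..<t+1}"]) auto
    have "((\<lambda>x. xi + integral {p..x} (G (apply_bcontfun w))) has_real_derivative F t (g t)) (at t within {p..})"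
      using d unfolding ateq Gg by (auto intro!: derivative_eq_intros)
    then show "(g has_real_derivative F t (g t)) (at t within {p..})"
      by (rule has_field_derivative_transform_within[of _ _ _ _ 1]) (use t geq in auto)
  qed
qed



lemma sqrt_gap:
  fixes a y :: real
  assumes "1 \<le> y" "y \<le> a"
  shows "a - y \<le> sqrt (a\<^sup>2 - 1) - sqrt (y\<^sup>2 - 1)"
proof -
  define A where "A = sqrt (a\<^sup>2 - 1)"
  define Y where "Y = sqrt (y\<^sup>2 - 1)"
  have a2: "a\<^sup>2 \<ge> 1" "y\<^sup>2 \<ge> 1" by (rule one_le_power, use assms in linarith)+
  have AA: "A\<^sup>2 = a\<^sup>2 - 1" "Y\<^sup>2 = y\<^sup>2 - 1" unfolding A_def Y_def by (rule real_sqrt_pow2, use a2 in linarith)+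
  have A0: "A \<ge> 0" "Y \<ge> 0" unfolding A_def Y_def by (rule real_sqrt_ge_zero, use a2 in linarith)+
  have "A \<le> sqrt (a\<^sup>2)" "Y \<le> sqrt (y\<^sup>2)" unfolding A_def Y_def by (rule real_sqrt_le_mono, simp)+
  then have Aa: "A \<le> a" "Y \<le> y" using assms by auto
  have e: "(A - Y) * (A + Y) = (a - y) * (a + y)" using AA by (simp add: algebra_simps power2_eq_square)
  have "(a - y) * (A + Y) \<le> (a - y) * (a + y)"
    using Aa A0 assms by (intro mult_left_mono) auto
  then have le: "(a - y) * (A + Y) \<le> (A - Y) * (A + Y)" using e by simp
  show ?thesis
  proof (cases "A + Y = 0")
    case True
    then have "A = 0" "Y = 0" using A0 by auto
    then have "a\<^sup>2 = 1" "y\<^sup>2 = 1" using AA by auto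
    then have "a = 1" "y = 1" using assms by (auto simp: power2_eq_1_iff)
    then show ?thesis by simp
  next
    case False
    then have "A + Y > 0" using A0 by auto
    then show ?thesis using le unfolding A_def[symmetric] Y_def[symmetric] by (simp add: mult_le_cancel_right_pos)
  qed
qed

lemma lip_key:
  fixes Z v k :: real
  assumes k: "k > 0" and Z: "0 \<le> Z" "(1+k)\<^sup>2 * v \<le> Z\<^sup>2"
  shows "Z \<le> (1+k) / sqrt ((1+k)\<^sup>2 - 1) * sqrt (Z\<^sup>2 - v)"
proof -
  define q where "q = (1+k)\<^sup>2"
  have q1: "q > 1" unfolding q_def using k by (simp add: power2_eq_square algebra_simps) (smt (verit) mult_pos_pos)
  have "Z\<^sup>2 * (q - 1) \<le> q * (Z\<^sup>2 - v)" using Z(2) unfolding q_def by (simp add: algebra_simps)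
  then have "sqrt (Z\<^sup>2 * (q - 1)) \<le> sqrt (q * (Z\<^sup>2 - v))" by (rule real_sqrt_le_mono)
  then have "Z * sqrt (q - 1) \<le> (1+k) * sqrt (Z\<^sup>2 - v)" using Z k
    by (simp add: real_sqrt_mult q_def)
  then show ?thesis using q1 unfolding q_def[symmetric] by (simp add: field_simps)
qed

lemma lipF:
  fixes v X Y k :: real
  assumes k: "k > 0" and v: "0 \<le> v" and X: "0 \<le> X" "(1+k)\<^sup>2 * v \<le> X\<^sup>2" and Y: "0 \<le> Y" "(1+k)\<^sup>2 * v \<le> Y\<^sup>2"
  shows "\<bar>sqrt (X\<^sup>2 - v) - sqrt (Y\<^sup>2 - v)\<bar> \<le> (1+k) / sqrt ((1+k)\<^sup>2 - 1) * \<bar>X - Y\<bar>"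
proof -
  define L where "L = (1+k) / sqrt ((1+k)\<^sup>2 - 1)"
  have q1: "(1+k)\<^sup>2 > 1" using k by (simp add: power2_eq_square algebra_simps) (smt (verit) mult_pos_pos)
  have L0: "L > 0" using q1 k by (simp add: L_def)
  have vX: "v \<le> X\<^sup>2" "v \<le> Y\<^sup>2" using X Y v q1 by (smt (verit) mult_le_cancel_right1)+
  define sX where "sX = sqrt (X\<^sup>2 - v)"
  define sY where "sY = sqrt (Y\<^sup>2 - v)"
  have sX: "X \<le> L * sX" "sX \<ge> 0" "sX\<^sup>2 = X\<^sup>2 - v"
    using lip_key[OF k X] vX unfolding sX_def L_def by auto
  have sY: "Y \<le> L * sY" "sY \<ge> 0" "sY\<^sup>2 = Y\<^sup>2 - v"
    using lip_key[OF k Y] vX unfolding sY_def L_def by auto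
  have e: "(sX - sY) * (sX + sY) = (X - Y) * (X + Y)" using sX(3) sY(3) by (simp add: algebra_simps power2_eq_square)
  show ?thesis
  proof (cases "sX + sY = 0")
    case True
    then have "sX = 0" "sY = 0" using sX sY by auto
    then have "X = 0" "Y = 0" using sX sY X Y by auto
    then show ?thesis by simp
  next
    case False
    then have pos: "sX + sY > 0" using sX sY by auto
    have "\<bar>sX - sY\<bar> * (sX + sY) = \<bar>X - Y\<bar> * (X + Y)"
      using e X Y sX(2) sY(2) by (metis abs_mult abs_of_nonneg add_nonneg_nonneg)
    also have "\<dots> \<le> \<bar>X - Y\<bar> * (L * (sX + sY))" using sX sY by (intro mult_left_mono) (auto simp: algebra_simps)
    finally have "\<bar>sX - sY\<bar> * (sX + sY) \<le> (L * \<bar>X - Y\<bar>) * (sX + sY)" by (simp add: algebra_simps)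
    then have "\<bar>sX - sY\<bar> \<le> L * \<bar>X - Y\<bar>" using pos by (simp add: mult_le_cancel_right_pos)
    then show ?thesis by (simp add: sX_def sY_def L_def)
  qed
qed

lemma barrier_up:
  fixes y y' :: "real \<Rightarrow> real"
  assumes d: "\<And>t. t \<ge> p \<Longrightarrow> (y has_real_derivative y' t) (at t)"
    and neg: "\<And>t. t \<ge> p \<Longrightarrow> y t \<le> a \<Longrightarrow> y' t < 0"
    and yp: "y p \<le> a" and t: "t \<ge> p"
  shows "y t \<le> a"
proof (rule ccontr)
  assume "\<not> y t \<le> a"
  then have yt: "y t > a" by simp
  have cont: "continuous_on {p..t} y"
    by (rule continuous_at_imp_continuous_on) (metis d DERIV_isCont atLeastAtMost_iff)
  define S where "S = {p..t} \<inter> y -` {..a}"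
  have cS: "closed S" unfolding S_def by (rule continuous_closed_preimage[OF cont]) auto
  have pS: "p \<in> S" using yp t by (auto simp: S_def)
  have bS: "bdd_above S" by (auto simp: S_def bdd_above_def)
  define s where "s = Sup S"
  have sS: "s \<in> S" unfolding s_def using closed_contains_Sup[OF _ bS cS] pS by auto
  then have s: "p \<le> s" "s \<le> t" "y s \<le> a" by (auto simp: S_def)
  have st: "s < t" using s yt by (cases "s = t") auto
  obtain dd where dd: "dd > 0" "\<And>h. h > 0 \<Longrightarrow> h < dd \<Longrightarrow> y s > y (s + h)"
    using DERIV_neg_dec_right[OF d[OF s(1)] neg[OF s(1) s(3)]] by blast
  define h where "h = min (dd/2) ((t - s)/2)"
  have h: "h > 0" "h < dd" "s + h \<le> t" unfolding h_def using dd st by (simp_all add: min_def field_simps)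
  have "s + h \<in> S" using dd(2)[OF h(1) h(2)] s h by (auto simp: S_def)
  then have "s + h \<le> s" unfolding s_def using bS by (metis cSup_upper)
  then show False using h by simp
qed

lemma barrier_down:
  fixes y y' :: "real \<Rightarrow> real"
  assumes d: "\<And>t. t \<ge> p \<Longrightarrow> (y has_real_derivative y' t) (at t)"
    and pos: "\<And>t. t \<ge> p \<Longrightarrow> y t \<ge> a \<Longrightarrow> y' t > 0"
    and yp: "y p \<ge> a" and t: "t \<ge> p"
  shows "y t \<ge> a"
proof -
  have "- y t \<le> - a"
    by (rule barrier_up[of p "\<lambda>t. - y t" "\<lambda>t. - y' t"]) (use d pos yp t in \<open>auto intro!: derivative_eq_intros\<close>)
  then show ?thesis by simp
qed



locale sepx =
  fixes v h :: "real \<Rightarrow> real" and \<alpha> \<phi>\<^sub>0 :: real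
  assumes a0: "0 \<le> \<alpha>" and a1: "\<alpha> < 1"
    and smooth: "\<forall>k x. ((deriv ^^ k) v) differentiable (at x)"
    and pos: "\<forall>\<phi>>\<phi>\<^sub>0. v \<phi> > 0 \<and> deriv v \<phi> > 0"
    and below1: "\<forall>\<phi>>\<phi>\<^sub>0. deriv (\<lambda>t. ln (sqrt (v t))) \<phi> < 1"
    and lim: "((\<lambda>\<phi>. deriv (\<lambda>t. ln (sqrt (v t))) \<phi>) \<longlongrightarrow> \<alpha>) at_top"
    and sep: "separatrix v \<phi>\<^sub>0 h"
begin

definition u where "u t = sqrt (v t)"
definition e where "e t = deriv (\<lambda>t. ln (sqrt (v t))) t"

lemma vder: "(v has_real_derivative deriv v t) (at t)"
proof -
  have "v differentiable (at t)" using smooth[rule_format, of 0 t] by simp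
  then show ?thesis by (simp add: DERIV_deriv_iff_real_differentiable)
qed

lemma visCont: "isCont v t" using vder DERIV_isCont by blast

lemma vcont: "continuous_on S v" by (simp add: continuous_at_imp_continuous_on visCont)

lemma ucont: "continuous_on S u" unfolding u_def[abs_def] by (intro continuous_intros vcont)

lemma vpos: "t > \<phi>\<^sub>0 \<Longrightarrow> v t > 0" using pos by auto

lemma upos: "t > \<phi>\<^sub>0 \<Longrightarrow> u t > 0" using vpos by (simp add: u_def)

lemma v0: "v \<phi>\<^sub>0 \<ge> 0"
proof -
  have "(v \<longlongrightarrow> v \<phi>\<^sub>0) (at_right \<phi>\<^sub>0)" using visCont[of \<phi>\<^sub>0]
    by (simp add: isCont_def filterlim_at_split)
  moreover have "eventually (\<lambda>t. v t \<ge> 0) (at_right \<phi>\<^sub>0)"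
    using vpos unfolding eventually_at_right_field by (auto intro!: exI[of _ "\<phi>\<^sub>0 + 1"] less_imp_le)
  ultimately show ?thesis by (rule tendsto_lowerbound) simp
qed

lemma vnn: "t \<ge> \<phi>\<^sub>0 \<Longrightarrow> v t \<ge> 0" using v0 vpos by (cases "t = \<phi>\<^sub>0") (auto intro: less_imp_le)

lemma usq: "t \<ge> \<phi>\<^sub>0 \<Longrightarrow> (u t)\<^sup>2 = v t" using vnn by (simp add: u_def)

lemma unn: "t \<ge> \<phi>\<^sub>0 \<Longrightarrow> u t \<ge> 0" by (simp add: u_def vnn)

lemma e_eq: "t > \<phi>\<^sub>0 \<Longrightarrow> e t = deriv v t / (2 * v t)"
  and uder: "t > \<phi>\<^sub>0 \<Longrightarrow> (u has_real_derivative e t * u t) (at t)"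
proof -
  assume t: "t > \<phi>\<^sub>0"
  have vt: "v t > 0" using vpos[OF t] .
  have d1: "(u has_real_derivative deriv v t / (2 * sqrt (v t))) (at t)"
  proof -
    have eq: "inverse (sqrt (v t)) / 2 * deriv v t = deriv v t / (2 * sqrt (v t))"
      using vt by (simp add: divide_simps)
    show ?thesis unfolding u_def[abs_def] using DERIV_chain2[OF DERIV_real_sqrt[OF vt] vder[of t]]
      unfolding eq .
  qed
  have ut: "u t > 0" using vt by (simp add: u_def)
  have vv: "v t = sqrt (v t) * sqrt (v t)" using vt by simp
  have "((\<lambda>t. ln (u t)) has_real_derivative inverse (u t) * (deriv v t / (2 * sqrt (v t)))) (at t)"
    by (rule DERIV_chain2[OF DERIV_ln[OF ut] d1])
  moreover have "inverse (u t) * (deriv v t / (2 * sqrt (v t))) = deriv v t / (2 * v t)"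
    using vt unfolding u_def by (subst (3) vv) (simp add: field_simps)
  ultimately have "((\<lambda>t. ln (sqrt (v t))) has_real_derivative deriv v t / (2 * v t)) (at t)"
    by (simp add: u_def)
  then show ee: "e t = deriv v t / (2 * v t)" unfolding e_def by (rule DERIV_imp_deriv)
  have "deriv v t / (2 * sqrt (v t)) = e t * u t" unfolding ee u_def using vt
    by (subst (2) vv) (simp add: field_simps)
  then show "(u has_real_derivative e t * u t) (at t)" using d1 by simp
qed

lemma e_lt1: "t > \<phi>\<^sub>0 \<Longrightarrow> e t < 1" using below1 by (simp add: e_def)

lemma e_lim: "(e \<longlongrightarrow> \<alpha>) at_top" using lim unfolding e_def[abs_def] by simp

lemma hB: "typeB_solution v \<phi>\<^sub>0 h" using sep unfolding separatrix_def by (rule conjunct1)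
lemma hInf: "h \<phi>\<^sub>0 = Inf {g \<phi>\<^sub>0 | g. typeB_solution v \<phi>\<^sub>0 g}" using sep unfolding separatrix_def by (rule conjunct2)

lemma hgt: "t \<ge> \<phi>\<^sub>0 \<Longrightarrow> h t > u t"
  using hB unfolding typeB_solution_def u_def by (meson)

lemma hder: "t \<ge> \<phi>\<^sub>0 \<Longrightarrow> (h has_real_derivative sqrt ((h t)\<^sup>2 - v t)) (at t within {\<phi>\<^sub>0..})"
  using hB unfolding typeB_solution_def by (meson)

lemma within_at:
  assumes "t > p" "(f has_real_derivative D) (at t within {p..})"
  shows "(f has_real_derivative D) (at t)"
proof -
  have "at t within {p..} = at t" using assms(1) by (intro at_within_interior) (simp add: interior_real_atLeast)
  then show ?thesis using assms(2) by simp
qed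

lemma hcont: "continuous_on {\<phi>\<^sub>0..} h"
  using hder by (auto intro!: continuous_on_eq_continuous_within[THEN iffD2] DERIV_continuous)

lemma ratio_deriv:
  assumes t: "t > \<phi>\<^sub>0" and d: "(k has_real_derivative K') (at t)"
  shows "((\<lambda>t. k t / u t) has_real_derivative (K' - k t * e t) / u t) (at t)"
proof -
  have ut: "u t > 0" using upos[OF t] .
  have "((\<lambda>t. k t / u t) has_real_derivative (K' * u t - k t * (e t * u t)) / (u t * u t)) (at t)"
    using d uder[OF t] ut by (auto intro!: derivative_eq_intros)
  moreover have "(K' * u t - k t * (e t * u t)) / (u t * u t) = (K' - k t * e t) / u t"
    using ut by (simp add: field_simps)
  ultimately show ?thesis by simp
qed

lemma sqrt_ratio:
  assumes t: "t > \<phi>\<^sub>0" and k: "k \<ge> u t"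
  shows "sqrt (k\<^sup>2 - v t) / u t = sqrt ((k / u t)\<^sup>2 - 1)"
proof -
  have ut: "u t > 0" using upos[OF t] .
  have "(k / u t)\<^sup>2 - 1 = (k\<^sup>2 - v t) / (u t)\<^sup>2" using ut usq[of t] t vpos[OF t] by (simp add: field_simps)
  then have "sqrt ((k / u t)\<^sup>2 - 1) = sqrt (k\<^sup>2 - v t) / u t" using ut by (simp add: real_sqrt_divide)
  then show ?thesis by simp
qed

definition ys where "ys = 1 / sqrt (1 - \<alpha>\<^sup>2)"

lemma ys_facts: "ys \<ge> 1" "ys\<^sup>2 * (1 - \<alpha>\<^sup>2) = 1" "ys > 0"
proof -
  have "\<alpha>\<^sup>2 < 1" using a0 a1 by (simp add: abs_square_less_1)
  then have q: "0 < 1 - \<alpha>\<^sup>2" "1 - \<alpha>\<^sup>2 \<le> 1" by simp_all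
  then have s: "0 < sqrt (1 - \<alpha>\<^sup>2)" "sqrt (1 - \<alpha>\<^sup>2) \<le> 1" by auto
  then show "ys \<ge> 1" "ys > 0" by (auto simp: ys_def)
  show "ys\<^sup>2 * (1 - \<alpha>\<^sup>2) = 1" using q by (simp add: ys_def power_divide)
qed

lemma G_neg:
  assumes "1 \<le> a" "a < ys"
  shows "sqrt (a\<^sup>2 - 1) < \<alpha> * a"
proof -
  have "a\<^sup>2 < ys\<^sup>2" using assms by (intro power_strict_mono) auto
  then have "a\<^sup>2 * (1 - \<alpha>\<^sup>2) < ys\<^sup>2 * (1 - \<alpha>\<^sup>2)"
    using a0 a1 abs_square_less_1[of \<alpha>] by (intro mult_strict_right_mono) auto
  then have "a\<^sup>2 - 1 < (\<alpha> * a)\<^sup>2" using ys_facts(2) by (simp add: algebra_simps power_mult_distrib)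
  then have "sqrt (a\<^sup>2 - 1) < sqrt ((\<alpha> * a)\<^sup>2)" by (rule real_sqrt_less_mono)
  then show ?thesis using a0 assms by simp
qed

lemma G_pos:
  assumes "a > ys"
  shows "sqrt (a\<^sup>2 - 1) > \<alpha> * a"
proof -
  have "ys\<^sup>2 < a\<^sup>2" using assms ys_facts by (intro power_strict_mono) auto
  then have "ys\<^sup>2 * (1 - \<alpha>\<^sup>2) < a\<^sup>2 * (1 - \<alpha>\<^sup>2)"
    using a0 a1 abs_square_less_1[of \<alpha>] by (intro mult_strict_right_mono) auto
  then have "(\<alpha> * a)\<^sup>2 < a\<^sup>2 - 1" using ys_facts(2) by (simp add: algebra_simps power_mult_distrib)
  then have "sqrt ((\<alpha> * a)\<^sup>2) < sqrt (a\<^sup>2 - 1)" by (rule real_sqrt_less_mono)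
  then show ?thesis using a0 assms ys_facts by simp
qed

lemma Gmono:
  assumes "1 \<le> y" "y \<le> a" "e' \<le> 1"
  shows "sqrt (y\<^sup>2 - 1) - e' * y \<le> sqrt (a\<^sup>2 - 1) - e' * a"
proof -
  have "a - y \<le> sqrt (a\<^sup>2 - 1) - sqrt (y\<^sup>2 - 1)" by (rule sqrt_gap[OF assms(1,2)])
  moreover have "0 \<le> (1 - e') * (a - y)" using assms by (intro mult_nonneg_nonneg) auto
  then have "e' * (a - y) \<le> a - y" by (simp add: algebra_simps)
  ultimately show ?thesis by (simp add: algebra_simps)
qed

lemma kder:
  assumes t: "t > \<phi>\<^sub>0" and kt: "k t \<ge> u t" and d: "(k has_real_derivative sqrt ((k t)\<^sup>2 - v t)) (at t)"
  shows "((\<lambda>t. k t / u t) has_real_derivative sqrt ((k t / u t)\<^sup>2 - 1) - e t * (k t / u t)) (at t)"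
proof -
  have "(sqrt ((k t)\<^sup>2 - v t) - k t * e t) / u t = sqrt ((k t)\<^sup>2 - v t) / u t - e t * (k t / u t)"
    by (simp add: diff_divide_distrib)
  also have "\<dots> = sqrt ((k t / u t)\<^sup>2 - 1) - e t * (k t / u t)" using sqrt_ratio[OF t kt] by simp
  finally show ?thesis using ratio_deriv[OF t d] by simp
qed

lemma yder: "t > \<phi>\<^sub>0 \<Longrightarrow> ((\<lambda>t. h t / u t) has_real_derivative sqrt ((h t / u t)\<^sup>2 - 1) - e t * (h t / u t)) (at t)"
  by (rule kder) (auto intro: hgt[THEN less_imp_le] within_at[OF _ hder])

lemma ygt1: "t > \<phi>\<^sub>0 \<Longrightarrow> h t / u t > 1" using hgt[of t] upos[of t] by simp

lemma e_near: "\<eta> > 0 \<Longrightarrow> \<exists>T>\<phi>\<^sub>0. \<forall>t\<ge>T. \<bar>e t - \<alpha>\<bar> < \<eta>"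
proof -
  assume "\<eta> > 0"
  then have "eventually (\<lambda>t. dist (e t) \<alpha> < \<eta>) at_top" by (rule tendstoD[OF e_lim])
  then obtain N where N: "\<And>t. t \<ge> N \<Longrightarrow> \<bar>e t - \<alpha>\<bar> < \<eta>" by (auto simp: eventually_at_top_linorder dist_real_def)
  show ?thesis by (rule exI[of _ "max N (\<phi>\<^sub>0 + 1)"]) (auto intro: N)
qed

lemma lower:
  assumes \<delta>: "\<delta> > 0"
  shows "eventually (\<lambda>t. h t / u t > ys - \<delta>) at_top"
proof (cases "ys - \<delta> \<le> 1")
  case True
  show ?thesis
    by (rule eventually_mono[OF eventually_gt_at_top[of \<phi>\<^sub>0]]) (use ygt1 True in force)
next
  case False
  define a where "a = ys - \<delta>"
  have a1': "a > 1" "a < ys" using False \<delta> by (auto simp: a_def)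
  define c where "c = (\<alpha> * a - sqrt (a\<^sup>2 - 1)) / 2"
  have c: "c > 0" using G_neg[of a] a1' by (simp add: c_def)
  obtain T where T: "T > \<phi>\<^sub>0" "\<And>t. t \<ge> T \<Longrightarrow> \<bar>e t - \<alpha>\<bar> < c / a"
    using e_near[of "c / a"] c a1' by auto
  have "h t / u t > a" if t: "t \<ge> T" for t
  proof (rule ccontr)
    assume "\<not> h t / u t > a"
    then have ya: "h t / u t \<le> a" by simp
    define y where "y s = h s / u s" for s
    define y' where "y' s = sqrt ((y s)\<^sup>2 - 1) - e s * y s" for s
    have dy: "(y has_real_derivative y' s) (at s)" if "s \<ge> t" for s
      unfolding y_def[abs_def] y'_def using yder[of s] that t T by (simp add: y_def)
    have slope: "y' s < - c" if "s \<ge> t" "y s \<le> a" for s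
    proof -
      have s: "s > \<phi>\<^sub>0" "s \<ge> T" using that t T by auto
      have "y' s \<le> sqrt (a\<^sup>2 - 1) - e s * a"
        unfolding y'_def by (rule Gmono) (use ygt1[OF s(1)] that e_lt1[OF s(1)] in \<open>auto simp: y_def\<close>)
      also have "\<dots> = (sqrt (a\<^sup>2 - 1) - \<alpha> * a) - (e s - \<alpha>) * a" by (simp add: algebra_simps)
      also have "\<dots> < - c"
      proof -
        have "\<bar>(e s - \<alpha>) * a\<bar> < c" using T(2)[OF s(2)] a1' by (simp add: abs_mult pos_less_divide_eq)
        then have "- c < (e s - \<alpha>) * a" by (simp add: abs_less_iff)
        moreover have "\<And>X S A :: real. - c < X \<Longrightarrow> c = (A - S) / 2 \<Longrightarrow> S - A - X < - c" by argo
        ultimately show ?thesis using c_def by blast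
      qed
      finally show ?thesis .
    qed
    have ya_all: "y s \<le> a" if "s \<ge> t" for s
      by (rule barrier_up[of t y y' a s]) (use dy slope ya that c in \<open>force simp: y_def\<close>)+
    define s1 where "s1 = t + a / c"
    have "y s1 + c * s1 \<le> y t + c * t"
    proof (rule DERIV_nonpos_imp_nonincreasing[of t s1 "\<lambda>s. y s + c * s"])
      show "t \<le> s1" using c a1' by (simp add: s1_def)
      fix x assume "t \<le> x" "x \<le> s1"
      then show "\<exists>d. ((\<lambda>s. y s + c * s) has_real_derivative d) (at x) \<and> d \<le> 0"
        using dy[of x] slope[of x] ya_all[of x] by (intro exI[of _ "y' x + c"]) (auto intro!: derivative_eq_intros)
    qed
    then have "y s1 \<le> y t - a" using c by (simp add: s1_def algebra_simps)
    moreover have "y s1 > 1"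
    proof -
      have "a / c > 0" using c a1' by simp
      then have "s1 > \<phi>\<^sub>0" using t T by (simp add: s1_def)
      then show ?thesis using ygt1[of s1] by (simp add: y_def)
    qed
    moreover have "y t \<le> a" using ya by (simp add: y_def)
    ultimately show False using a1' by linarith
  qed
  then show ?thesis unfolding eventually_at_top_linorder a_def by blast
qed

lemma v_comp[continuous_intros]: "continuous_on S f \<Longrightarrow> continuous_on S (\<lambda>z. v (f z))"
  by (rule continuous_on_compose2[OF vcont]) auto

lemma u_comp[continuous_intros]: "continuous_on S f \<Longrightarrow> continuous_on S (\<lambda>z. u (f z))"
  by (rule continuous_on_compose2[OF ucont]) auto

lemma ubound: "\<exists>Mu\<ge>0. \<forall>t\<ge>\<phi>\<^sub>0. u t \<le> Mu * exp (t - \<phi>\<^sub>0)"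
proof -
  define t1 where "t1 = \<phi>\<^sub>0 + 1"
  obtain x1 where x1: "x1 \<in> {\<phi>\<^sub>0..t1}" "\<And>y. y \<in> {\<phi>\<^sub>0..t1} \<Longrightarrow> u y \<le> u x1"
    using continuous_attains_sup[of "{\<phi>\<^sub>0..t1}" u] ucont by (auto simp: t1_def)
  define U1 where "U1 = u x1"
  have U1: "U1 \<ge> 0" using unn x1 by (auto simp: U1_def)
  have "u t \<le> U1 * exp (t - \<phi>\<^sub>0)" if t: "t \<ge> \<phi>\<^sub>0" for t
  proof (cases "t \<le> t1")
    case True
    then have "u t \<le> U1" using x1 t by (auto simp: U1_def)
    also have "\<dots> \<le> U1 * exp (t - \<phi>\<^sub>0)" using U1 t by (simp add: mult_le_cancel_left1)
    finally show ?thesis .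
  next
    case False
    have t1p: "t1 > \<phi>\<^sub>0" by (simp add: t1_def)
    have "ln (u t) - t \<le> ln (u t1) - t1"
    proof (rule DERIV_nonpos_imp_nonincreasing[of t1 t "\<lambda>s. ln (u s) - s"])
      show "t1 \<le> t" using False by simp
      fix x assume x: "t1 \<le> x" "x \<le> t"
      then have xp: "x > \<phi>\<^sub>0" using t1p by simp
      have "((\<lambda>s. ln (u s) - s) has_real_derivative inverse (u x) * (e x * u x) - 1) (at x)"
        by (rule derivative_eq_intros DERIV_chain2[OF DERIV_ln[OF upos[OF xp]] uder[OF xp]] | simp)+
      moreover have "inverse (u x) * (e x * u x) - 1 = e x - 1" using upos[OF xp] by simp
      ultimately show "\<exists>y. ((\<lambda>s. ln (u s) - s) has_real_derivative y) (at x) \<and> y \<le> 0"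
        using e_lt1[OF xp] by auto
    qed
    then have "ln (u t) \<le> ln (u t1) + (t - t1)" by simp
    then have "exp (ln (u t)) \<le> exp (ln (u t1) + (t - t1))" by simp
    then have "u t \<le> u t1 * exp (t - t1)" using upos[of t] upos[OF t1p] False t1p by (simp add: exp_add)
    also have "\<dots> \<le> U1 * exp (t - \<phi>\<^sub>0)"
    proof (rule mult_mono)
      show "u t1 \<le> U1" using x1 by (auto simp: U1_def t1_def)
      show "exp (t - t1) \<le> exp (t - \<phi>\<^sub>0)" by (simp add: t1_def)
    qed (use U1 in auto)
    finally show ?thesis .
  qed
  then show ?thesis using U1 by blast
qed

lemma max_lip: "\<bar>max x b - max y b\<bar> \<le> \<bar>x - (y::real)\<bar>"
  by (simp add: max_def abs_if)

lemma no_escape: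
  assumes p1: "\<phi>\<^sub>1 > \<phi>\<^sub>0" and a2: "a2 > 1" and hp1: "a2 * u \<phi>\<^sub>1 < h \<phi>\<^sub>1"
    and grow: "\<And>t z. t \<ge> \<phi>\<^sub>1 \<Longrightarrow> z \<ge> a2 \<Longrightarrow> sqrt (z\<^sup>2 - 1) - e t * z > 0"
  shows False
proof -
  obtain t0 where t0: "t0 \<in> {\<phi>\<^sub>0..\<phi>\<^sub>1}" "\<And>y. y \<in> {\<phi>\<^sub>0..\<phi>\<^sub>1} \<Longrightarrow> h t0 - u t0 \<le> h y - u y"
  proof -
    have "continuous_on {\<phi>\<^sub>0..\<phi>\<^sub>1} (\<lambda>t. h t - u t)"
      using continuous_on_subset[OF hcont, of "{\<phi>\<^sub>0..\<phi>\<^sub>1}"] by (intro continuous_intros ucont) auto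
    then show ?thesis using continuous_attains_inf[of "{\<phi>\<^sub>0..\<phi>\<^sub>1}" "\<lambda>t. h t - u t"] p1 that by auto
  qed
  define m0 where "m0 = h t0 - u t0"
  have m0: "m0 > 0" using hgt[of t0] t0 by (auto simp: m0_def)
  have hm0: "t \<in> {\<phi>\<^sub>0..\<phi>\<^sub>1} \<Longrightarrow> h t \<ge> u t + m0" for t using t0(2)[of t] by (auto simp: m0_def)
  obtain tU where tU: "tU \<in> {\<phi>\<^sub>0..\<phi>\<^sub>1}" "\<And>y. y \<in> {\<phi>\<^sub>0..\<phi>\<^sub>1} \<Longrightarrow> u y \<le> u tU"
    using continuous_attains_sup[of "{\<phi>\<^sub>0..\<phi>\<^sub>1}" u] ucont p1 by auto
  define U where "U = u tU"
  have U: "U \<ge> 0" using unn tU by (auto simp: U_def)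
  define \<kappa> where "\<kappa> = min (m0 / (2 * (U + 1))) ((a2 - 1) / 2)"
  have \<kappa>: "\<kappa> > 0" using m0 U a2 by (auto simp: \<kappa>_def)
  have "\<kappa> \<le> (a2 - 1) / 2" unfolding \<kappa>_def by (rule min.cobounded2)
  then have \<kappa>a2: "1 + \<kappa> < a2" using a2 by argo
  have \<kappa>U: "\<kappa> * U \<le> m0 / 2"
  proof -
    have "\<kappa> * U \<le> m0 / (2 * (U + 1)) * U" using U by (intro mult_right_mono) (auto simp: \<kappa>_def)
    also have "\<dots> \<le> m0 / 2" using U m0 by (simp add: field_simps)
    finally show ?thesis .
  qed
  define Lk where "Lk = (1+\<kappa>) / sqrt ((1+\<kappa>)\<^sup>2 - 1)"
  have Lk: "Lk \<ge> 0" unfolding Lk_def using \<kappa> by simp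
  define b where "b t = (1+\<kappa>) * u t" for t
  have b0: "t \<ge> \<phi>\<^sub>0 \<Longrightarrow> b t \<ge> 0" for t using unn[of t] \<kappa> by (simp add: b_def)
  have bsq: "t \<ge> \<phi>\<^sub>0 \<Longrightarrow> (b t)\<^sup>2 = (1+\<kappa>)\<^sup>2 * v t" for t using usq[of t] by (simp add: b_def power_mult_distrib)
  have bU: "t \<in> {\<phi>\<^sub>0..\<phi>\<^sub>1} \<Longrightarrow> b t \<le> u t + m0 / 2" for t
  proof -
    assume t: "t \<in> {\<phi>\<^sub>0..\<phi>\<^sub>1}"
    have "\<kappa> * u t \<le> \<kappa> * U" using tU(2)[OF t] \<kappa> by (simp add: U_def)
    then show ?thesis using \<kappa>U by (simp add: b_def algebra_simps)
  qed
  define F where "F t x = sqrt ((max x (b t))\<^sup>2 - v t)" for t x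
  have Fcont: "continuous_on UNIV (\<lambda>z. F (fst z) (snd z))"
    unfolding F_def b_def by (intro continuous_intros)
  have Flip: "\<bar>F t x - F t y\<bar> \<le> Lk * \<bar>x - y\<bar>" if t: "t \<ge> \<phi>\<^sub>0" for t x y
  proof -
    have X: "0 \<le> max x (b t)" "(1+\<kappa>)\<^sup>2 * v t \<le> (max x (b t))\<^sup>2"
    proof -
      show "0 \<le> max x (b t)" using b0[OF t] by (rule max.coboundedI2)
      have "(b t)\<^sup>2 \<le> (max x (b t))\<^sup>2" by (rule power_mono[OF max.cobounded2 b0[OF t]])
      then show "(1+\<kappa>)\<^sup>2 * v t \<le> (max x (b t))\<^sup>2" by (simp only: bsq[OF t])
    qed
    have Y: "0 \<le> max y (b t)" "(1+\<kappa>)\<^sup>2 * v t \<le> (max y (b t))\<^sup>2"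
    proof -
      show "0 \<le> max y (b t)" using b0[OF t] by (rule max.coboundedI2)
      have "(b t)\<^sup>2 \<le> (max y (b t))\<^sup>2" by (rule power_mono[OF max.cobounded2 b0[OF t]])
      then show "(1+\<kappa>)\<^sup>2 * v t \<le> (max y (b t))\<^sup>2" by (simp only: bsq[OF t])
    qed
    have "\<bar>F t x - F t y\<bar> \<le> Lk * \<bar>max x (b t) - max y (b t)\<bar>"
      unfolding F_def Lk_def by (rule lipF[OF \<kappa> vnn[OF t] X Y])
    also have "\<dots> \<le> Lk * \<bar>x - y\<bar>" using Lk max_lip by (intro mult_left_mono) auto
    finally show ?thesis .
  qed
  obtain Mu where Mu: "Mu \<ge> 0" "\<And>t. t \<ge> \<phi>\<^sub>0 \<Longrightarrow> u t \<le> Mu * exp (t - \<phi>\<^sub>0)" using ubound by blast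
  have Fgrowth: "\<bar>F t 0\<bar> \<le> ((1+\<kappa>) * Mu) * exp (1 * (t - \<phi>\<^sub>0))" if t: "t \<ge> \<phi>\<^sub>0" for t
  proof -
    have m: "max 0 (b t) = b t" using b0[OF t] by simp
    have "1 \<le> (1+\<kappa>)\<^sup>2" by (rule one_le_power) (use \<kappa> in linarith)
    then have "1 * v t \<le> (1+\<kappa>)\<^sup>2 * v t" by (rule mult_right_mono) (rule vnn[OF t])
    then have nn: "(b t)\<^sup>2 - v t \<ge> 0" by (simp add: bsq[OF t])
    have "\<bar>F t 0\<bar> = sqrt ((b t)\<^sup>2 - v t)" unfolding F_def m using nn by simp
    also have "\<dots> \<le> sqrt ((b t)\<^sup>2)" using vnn[OF t] by (intro real_sqrt_le_mono) simp
    also have "\<dots> = b t" using b0[OF t] by simp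
    also have "\<dots> \<le> (1+\<kappa>) * (Mu * exp (t - \<phi>\<^sub>0))" unfolding b_def using Mu(2)[OF t] \<kappa> by (intro mult_left_mono) auto
    finally show ?thesis by simp
  qed
  define \<eta> where "\<eta> = min (m0 / 4) ((h \<phi>\<^sub>1 - a2 * u \<phi>\<^sub>1) / 2) * exp (- Lk * (\<phi>\<^sub>1 - \<phi>\<^sub>0))"
  have \<eta>: "\<eta> > 0" using m0 hp1 by (simp add: \<eta>_def)
  have \<eta>bound: "\<eta> * exp (Lk * (t - \<phi>\<^sub>0)) \<le> min (m0 / 4) ((h \<phi>\<^sub>1 - a2 * u \<phi>\<^sub>1) / 2)" if "t \<le> \<phi>\<^sub>1" for t
  proof -
    have "\<eta> * exp (Lk * (t - \<phi>\<^sub>0)) \<le> \<eta> * exp (Lk * (\<phi>\<^sub>1 - \<phi>\<^sub>0))"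
      using \<eta> Lk that by (intro mult_left_mono) (auto intro!: mult_left_mono)
    also have "\<dots> = min (m0 / 4) ((h \<phi>\<^sub>1 - a2 * u \<phi>\<^sub>1) / 2)"
    proof -
      have "exp (- Lk * (\<phi>\<^sub>1 - \<phi>\<^sub>0)) * exp (Lk * (\<phi>\<^sub>1 - \<phi>\<^sub>0)) = 1"
        by (simp add: exp_add[symmetric])
      then show ?thesis unfolding \<eta>_def by (simp add: mult.assoc)
    qed
    finally show ?thesis .
  qed
  obtain g where g0: "g \<phi>\<^sub>0 = h \<phi>\<^sub>0 - \<eta>"
    and gder: "\<And>t. t \<ge> \<phi>\<^sub>0 \<Longrightarrow> (g has_real_derivative F t (g t)) (at t within {\<phi>\<^sub>0..})"
    using ode_exists[where F=F and L=Lk and p="\<phi>\<^sub>0" and xi="h \<phi>\<^sub>0 - \<eta>", OF Fcont Lk Flip _ Fgrowth] by auto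
  have gcont: "continuous_on {\<phi>\<^sub>0..} g"
    using gder by (auto intro!: continuous_on_eq_continuous_within[THEN iffD2] DERIV_continuous)
  have Fh: "F t (h t) = sqrt ((h t)\<^sup>2 - v t)" if t: "t \<in> {\<phi>\<^sub>0..\<phi>\<^sub>1}" for t
  proof -
    have "b t \<le> h t" using bU[OF t] hm0[OF t] m0 by linarith
    then show ?thesis by (simp add: F_def max_def)
  qed
  have Fg: "F t (g t) = sqrt ((g t)\<^sup>2 - v t)" if "b t \<le> g t" for t
    using that by (simp add: F_def max_def)
  have gron: "\<bar>h t - g t\<bar> \<le> \<eta> * exp (Lk * (t - \<phi>\<^sub>0))" if t: "t \<in> {\<phi>\<^sub>0..\<phi>\<^sub>1}" for t
  proof -
    define D where "D s = (h s - g s)\<^sup>2 * exp (-2*Lk*(s - \<phi>\<^sub>0))" for s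
    have "- D \<phi>\<^sub>0 \<le> - D t"
    proof (rule DERIV_nonneg_imp_increasing_open[of "\<phi>\<^sub>0" t])
      show "\<phi>\<^sub>0 \<le> t" using t by simp
      show "continuous_on {\<phi>\<^sub>0..t} (\<lambda>s. - D s)"
        unfolding D_def using continuous_on_subset[OF hcont, of "{\<phi>\<^sub>0..t}"] continuous_on_subset[OF gcont, of "{\<phi>\<^sub>0..t}"]
        by (intro continuous_intros) auto
      fix x assume x: "\<phi>\<^sub>0 < x" "x < t"
      have xi: "x \<in> {\<phi>\<^sub>0..\<phi>\<^sub>1}" using x t by auto
      have dh: "(h has_real_derivative F x (h x)) (at x)"
        using within_at[OF x(1) hder[of x]] x Fh[OF xi] by simp
      have dg: "(g has_real_derivative F x (g x)) (at x)"
        using within_at[OF x(1) gder[of x]] x by simp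
      define d where "d = h x - g x"
      define dd where "dd = F x (h x) - F x (g x)"
      define E where "E = exp (-2*Lk*(x - \<phi>\<^sub>0))"
      have E: "E > 0" by (simp add: E_def)
      have "((\<lambda>s. - D s) has_real_derivative - (2 * d * dd * E + d\<^sup>2 * (-2 * Lk * E))) (at x)"
        unfolding D_def d_def dd_def E_def
        by (rule derivative_eq_intros dh dg refl | simp)+
      moreover have "- (2 * d * dd * E + d\<^sup>2 * (-2 * Lk * E)) \<ge> 0"
      proof -
        have "d * dd \<le> \<bar>d\<bar> * \<bar>dd\<bar>" by (simp add: abs_mult[symmetric])
        also have "\<dots> \<le> \<bar>d\<bar> * (Lk * \<bar>d\<bar>)" unfolding dd_def d_def using Flip[of x "h x" "g x"] x
          by (intro mult_left_mono) auto
        finally have "d * dd \<le> Lk * d\<^sup>2" by (simp add: power2_eq_square algebra_simps)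
        then have "0 \<le> (Lk * d\<^sup>2 - d * dd) * (2 * E)" using E by simp
        then show ?thesis by (simp add: algebra_simps)
      qed
      ultimately show "\<exists>y. ((\<lambda>s. - D s) has_real_derivative y) (at x) \<and> y \<ge> 0" by blast
    qed
    then have "D t \<le> D \<phi>\<^sub>0" by simp
    also have "D \<phi>\<^sub>0 = \<eta>\<^sup>2" using g0 by (simp add: D_def)
    finally have "(h t - g t)\<^sup>2 * exp (-2*Lk*(t - \<phi>\<^sub>0)) \<le> \<eta>\<^sup>2" by (simp add: D_def)
    then have le1: "(h t - g t)\<^sup>2 * exp (-2*Lk*(t - \<phi>\<^sub>0)) * exp (2*Lk*(t - \<phi>\<^sub>0)) \<le> \<eta>\<^sup>2 * exp (2*Lk*(t - \<phi>\<^sub>0))"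
      by (rule mult_right_mono) simp
    have "exp (-2*Lk*(t - \<phi>\<^sub>0)) * exp (2*Lk*(t - \<phi>\<^sub>0)) = 1" by (simp add: exp_add[symmetric])
    then have "(h t - g t)\<^sup>2 = (h t - g t)\<^sup>2 * exp (-2*Lk*(t - \<phi>\<^sub>0)) * exp (2*Lk*(t - \<phi>\<^sub>0))"
      by (simp only: mult.assoc)
    also note le1
    finally have "(h t - g t)\<^sup>2 \<le> \<eta>\<^sup>2 * exp (2*Lk*(t - \<phi>\<^sub>0))" .
    also have "\<dots> = (\<eta> * exp (Lk * (t - \<phi>\<^sub>0)))\<^sup>2"
      by (simp add: power_mult_distrib exp_double[symmetric] power2_eq_square exp_add[symmetric] algebra_simps)
    finally have "\<bar>h t - g t\<bar>\<^sup>2 \<le> (\<eta> * exp (Lk * (t - \<phi>\<^sub>0)))\<^sup>2" by simp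
    then show ?thesis by (rule power2_le_imp_le) (use \<eta> in simp)
  qed
  have g1: "g t > u t \<and> b t \<le> g t" if t: "t \<in> {\<phi>\<^sub>0..\<phi>\<^sub>1}" for t
  proof -
    have "\<bar>h t - g t\<bar> \<le> m0 / 4" using gron[OF t] \<eta>bound[of t] t by auto
    then have "h t - g t \<le> m0 / 4" using abs_ge_self[of "h t - g t"] by argo
    then show ?thesis using hm0[OF t] bU[OF t] m0 by argo
  qed
  have gp1: "g \<phi>\<^sub>1 > a2 * u \<phi>\<^sub>1"
  proof -
    have "\<bar>h \<phi>\<^sub>1 - g \<phi>\<^sub>1\<bar> \<le> (h \<phi>\<^sub>1 - a2 * u \<phi>\<^sub>1) / 2" using gron[of "\<phi>\<^sub>1"] \<eta>bound[of "\<phi>\<^sub>1"] p1 by auto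
    then show ?thesis using hp1 abs_ge_self[of "h \<phi>\<^sub>1 - g \<phi>\<^sub>1"] by argo
  qed
  have zge: "g t / u t \<ge> a2" if t: "t \<ge> \<phi>\<^sub>1" for t
  proof (rule barrier_down[of "\<phi>\<^sub>1" "\<lambda>t. g t / u t" "\<lambda>t. (F t (g t) - g t * e t) / u t" a2 t])
    fix s assume s: "s \<ge> \<phi>\<^sub>1"
    then have s0: "s > \<phi>\<^sub>0" using p1 by simp
    show "((\<lambda>t. g t / u t) has_real_derivative (F s (g s) - g s * e s) / u s) (at s)"
      by (rule ratio_deriv[OF s0 within_at[OF s0 gder]]) (use s0 in simp)
    assume z: "g s / u s \<ge> a2"
    have us: "u s > 0" using upos[OF s0] .
    have ga: "g s \<ge> a2 * u s" using z us by (simp add: pos_le_divide_eq mult.commute)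
    have gb: "b s \<le> g s" using ga mult_right_mono[of "1+\<kappa>" a2 "u s"] \<kappa>a2 us unfolding b_def by argo
    have gu: "u s \<le> g s" using ga mult_right_mono[of 1 a2 "u s"] a2 us by argo
    have "(F s (g s) - g s * e s) / u s = sqrt ((g s)\<^sup>2 - v s) / u s - e s * (g s / u s)"
      using Fg[OF gb] by (simp add: diff_divide_distrib)
    also have "\<dots> = sqrt ((g s / u s)\<^sup>2 - 1) - e s * (g s / u s)" using sqrt_ratio[OF s0 gu] by simp
    finally show "(F s (g s) - g s * e s) / u s > 0" using grow[OF s z] by simp
  next
    show "g \<phi>\<^sub>1 / u \<phi>\<^sub>1 \<ge> a2" using gp1 upos[OF p1] by (simp add: pos_le_divide_eq mult.commute)
  qed (use t in simp)
  have g2: "g t > u t \<and> b t \<le> g t" if t: "t \<ge> \<phi>\<^sub>1" for t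
  proof -
    have t0': "t > \<phi>\<^sub>0" using t p1 by simp
    have us: "u t > 0" using upos[OF t0'] .
    have ga: "g t \<ge> a2 * u t" using zge[OF t] us by (simp add: pos_le_divide_eq mult.commute)
    have "b t \<le> g t" using ga mult_right_mono[of "1+\<kappa>" a2 "u t"] \<kappa>a2 us unfolding b_def by argo
    moreover have "u t < g t" using ga mult_strict_right_mono[of 1 a2 "u t"] a2 us by argo
    ultimately show ?thesis by simp
  qed
  have gall: "g t > u t \<and> b t \<le> g t" if "t \<ge> \<phi>\<^sub>0" for t
    using g1[of t] g2[of t] that by (cases "t \<le> \<phi>\<^sub>1") auto
  have gB: "typeB_solution v \<phi>\<^sub>0 g"
    unfolding typeB_solution_def
  proof (intro allI impI conjI)
    fix t assume t: "t \<ge> \<phi>\<^sub>0"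
    show "g t > sqrt (v t)" using gall[OF t] by (simp add: u_def)
    show "(g has_real_derivative sqrt ((g t)\<^sup>2 - v t)) (at t within {\<phi>\<^sub>0..})"
      using gder[OF t] Fg[of t] gall[OF t] by simp
  qed
  have "bdd_below {g \<phi>\<^sub>0 | g. typeB_solution v \<phi>\<^sub>0 g}"
  proof (rule bdd_belowI[of _ 0])
    fix x assume "x \<in> {g \<phi>\<^sub>0 | g. typeB_solution v \<phi>\<^sub>0 g}"
    then obtain g' where "x = g' \<phi>\<^sub>0" "typeB_solution v \<phi>\<^sub>0 g'" by blast
    then have "x > sqrt (v \<phi>\<^sub>0)" unfolding typeB_solution_def by simp
    then show "0 \<le> x" using real_sqrt_ge_zero[OF v0] by linarith
  qed
  then have "h \<phi>\<^sub>0 \<le> g \<phi>\<^sub>0" unfolding hInf using gB by (blast intro: cInf_lower)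
  then show False using g0 \<eta> by simp
qed

lemma upper:
  assumes \<delta>: "\<delta> > 0"
  shows "eventually (\<lambda>t. h t / u t < ys + \<delta>) at_top"
proof -
  define a where "a = ys + \<delta>"
  define a2 where "a2 = ys + \<delta> / 2"
  have a2: "a2 > ys" "a2 > 1" "a2 < a" using \<delta> ys_facts by (auto simp: a2_def a_def)
  define c where "c = (sqrt (a2\<^sup>2 - 1) - \<alpha> * a2) / 2"
  have c: "c > 0" using G_pos[OF a2(1)] by (simp add: c_def)
  obtain T where T: "T > \<phi>\<^sub>0" "\<And>t. t \<ge> T \<Longrightarrow> \<bar>e t - \<alpha>\<bar> < c / a2"
    using e_near[of "c / a2"] c a2 by auto
  have "h t / u t < a" if t: "t \<ge> T" for t
  proof (rule ccontr)
    assume "\<not> h t / u t < a"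
    then have ya: "a \<le> h t / u t" by simp
    have t0: "t > \<phi>\<^sub>0" using t T by simp
    have ut: "u t > 0" using upos[OF t0] .
    have "a * u t \<le> h t" using ya ut by (simp add: pos_le_divide_eq mult.commute)
    moreover have "a2 * u t < a * u t" using a2 ut by simp
    ultimately have hp1: "a2 * u t < h t" by simp
    show False
    proof (rule no_escape[OF t0 a2(2) hp1])
      fix s z assume s: "s \<ge> t" and z: "z \<ge> a2"
      have s0: "s > \<phi>\<^sub>0" "s \<ge> T" using s t T by auto
      have "sqrt (a2\<^sup>2 - 1) - e s * a2 \<le> sqrt (z\<^sup>2 - 1) - e s * z"
        by (rule Gmono) (use a2 z e_lt1[OF s0(1)] in auto)
      moreover have "\<bar>(e s - \<alpha>) * a2\<bar> < c" using T(2)[OF s0(2)] a2 by (simp add: abs_mult pos_less_divide_eq)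
      then have "(e s - \<alpha>) * a2 < c" using abs_ge_self[of "(e s - \<alpha>) * a2"] by argo
      moreover have "sqrt (a2\<^sup>2 - 1) - e s * a2 = (sqrt (a2\<^sup>2 - 1) - \<alpha> * a2) - (e s - \<alpha>) * a2"
        by (simp add: algebra_simps)
      ultimately show "sqrt (z\<^sup>2 - 1) - e s * z > 0" using c c_def by argo
    qed
  qed
  then show ?thesis unfolding eventually_at_top_linorder a_def by blast
qed

lemma main: "h \<sim>[at_top] (\<lambda>\<phi>. sqrt (v \<phi>) / sqrt (1 - \<alpha>\<^sup>2))"
proof -
  have y: "((\<lambda>t. h t / u t) \<longlongrightarrow> ys) at_top"
  proof (rule tendstoI)
    fix \<epsilon> :: real assume \<epsilon>: "\<epsilon> > 0"
    show "eventually (\<lambda>t. dist (h t / u t) ys < \<epsilon>) at_top"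
      using lower[OF \<epsilon>] upper[OF \<epsilon>]
      by eventually_elim (auto simp: dist_real_def abs_less_iff)
  qed
  have "((\<lambda>t. (h t / u t) * sqrt (1 - \<alpha>\<^sup>2)) \<longlongrightarrow> ys * sqrt (1 - \<alpha>\<^sup>2)) at_top"
    by (intro tendsto_intros y)
  moreover have "ys * sqrt (1 - \<alpha>\<^sup>2) = 1"
  proof -
    have "\<alpha>\<^sup>2 < 1" using a0 a1 by (simp add: abs_square_less_1)
    then show ?thesis by (simp add: ys_def)
  qed
  moreover have "(h t / u t) * sqrt (1 - \<alpha>\<^sup>2) = h t / (sqrt (v t) / sqrt (1 - \<alpha>\<^sup>2))" for t
    by (simp add: u_def)
  ultimately have "((\<lambda>t. h t / (sqrt (v t) / sqrt (1 - \<alpha>\<^sup>2))) \<longlongrightarrow> 1) at_top"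
    by (simp only:)
  then show ?thesis by (rule asymp_equivI')
qed

end

theorem theorem3:
  fixes v h :: "real \<Rightarrow> real" and \<alpha> \<phi>\<^sub>0 :: real
  assumes "0 \<le> \<alpha>" and "\<alpha> < 1"
    and smooth: "\<forall>k x. ((deriv ^^ k) v) differentiable (at x)"
    and pos: "\<forall>\<phi>>\<phi>\<^sub>0. v \<phi> > 0 \<and> deriv v \<phi> > 0"
    and below1: "\<forall>\<phi>>\<phi>\<^sub>0. deriv (\<lambda>t. ln (sqrt (v t))) \<phi> < 1"
    and lim: "((\<lambda>\<phi>. deriv (\<lambda>t. ln (sqrt (v t))) \<phi>) \<longlongrightarrow> \<alpha>) at_top"
    and sep: "separatrix v \<phi>\<^sub>0 h"
  shows "h \<sim>[at_top] (\<lambda>\<phi>. sqrt (v \<phi>) / sqrt (1 - \<alpha>\<^sup>2))"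
proof -
  interpret sepx v h \<alpha> \<phi>\<^sub>0
    using assms by unfold_locales
  show ?thesis by (rule main)
qed

end
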